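(* Let $\mathcal G=(V,E,r)$ be a graph and $k\ge2$. (1) $\rho_k(\mathbf A(\mathcal G))\le (k-1)|V|+1$. (2) Equality holds in (1) if and only if $\mathcal G$ contains $k$ edge-disjoint spanning trees. In particular, in case of equality the graph $\mathcal G$ has edge-connectivity at least $k$.
   Context: A graph $\mathcal G=(V,E,r)$ consists of a finite vertex set $V$, a finite edge set $E$ disjoint from $V$, and a map $r$ assigning to each edge a two-element subset of $V$; multiple edges allowed, no loops. An agglomeration on $\mathcal G$ is a function $a\colon V\cup E\to\mathbb N_0$ with $a(v)\ge a(e)$ whenever $v$ is incident with $e$; $\mathbf A(\mathcal G)$ is the monoid of agglomerations under pointwise addition. For a reduced atomic monoid $H$ and $a\in H$, $\mathsf L(a)$ is the set of $n$ such that $a$ is a sum of $n$ atoms, and for $k\ge2$ the refined elasticity is $\rho_k(H)=\sup\{\sup\mathsf L(a): a\in H,\ k\in\mathsf L(a)\}$. *)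

theory Defs
  imports Main "HOL-Library.Function_Algebras" "HOL-Library.Extended_Nat"
begin

text \<open>A graph (V,E,r): finite vertex set, finite edge set, each edge mapped to a
two-element subset of V (multiple edges allowed, no loops). Vertices and edges live
in different types, so V and E are automatically disjoint.\<close>

definition graph :: "'v set \<Rightarrow> 'e set \<Rightarrow> ('e \<Rightarrow> 'v set) \<Rightarrow> bool" where
  "graph V E r \<longleftrightarrow> finite V \<and> finite E \<and> (\<forall>e\<in>E. r e \<subseteq> V \<and> card (r e) = 2)"

definition agglomeration :: "'v set \<Rightarrow> 'e set \<Rightarrow> ('e \<Rightarrow> 'v set) \<Rightarrow> ('v + 'e \<Rightarrow> nat) \<Rightarrow> bool" where
  "agglomeration V E r a \<longleftrightarrow>
     (\<forall>x. x \<notin> Inl ` V \<union> Inr ` E \<longrightarrow> a x = 0) \<and>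
     (\<forall>e\<in>E. \<forall>v\<in>r e. a (Inr e) \<le> a (Inl v))"

definition agg_atom :: "'v set \<Rightarrow> 'e set \<Rightarrow> ('e \<Rightarrow> 'v set) \<Rightarrow> ('v + 'e \<Rightarrow> nat) \<Rightarrow> bool" where
  "agg_atom V E r a \<longleftrightarrow> agglomeration V E r a \<and> a \<noteq> 0 \<and>
     (\<forall>b c. agglomeration V E r b \<and> agglomeration V E r c \<and> a = b + c \<longrightarrow> b = 0 \<or> c = 0)"

definition agg_lengths :: "'v set \<Rightarrow> 'e set \<Rightarrow> ('e \<Rightarrow> 'v set) \<Rightarrow> ('v + 'e \<Rightarrow> nat) \<Rightarrow> nat set" where
  "agg_lengths V E r a = {n. \<exists>xs. length xs = n \<and> (\<forall>x\<in>set xs. agg_atom V E r x) \<and> sum_list xs = a}"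

definition agg_rho :: "'v set \<Rightarrow> 'e set \<Rightarrow> ('e \<Rightarrow> 'v set) \<Rightarrow> nat \<Rightarrow> enat" where
  "agg_rho V E r k = Sup {Sup (enat ` agg_lengths V E r a) | a.
       agglomeration V E r a \<and> k \<in> agg_lengths V E r a}"

definition adj :: "('e \<Rightarrow> 'v set) \<Rightarrow> 'e set \<Rightarrow> 'v \<Rightarrow> 'v \<Rightarrow> bool" where
  "adj r T u v \<longleftrightarrow> (\<exists>e\<in>T. r e = {u, v})"

definition connected_sub :: "'v set \<Rightarrow> ('e \<Rightarrow> 'v set) \<Rightarrow> 'e set \<Rightarrow> bool" where
  "connected_sub V r T \<longleftrightarrow> (\<forall>u\<in>V. \<forall>v\<in>V. (adj r T)\<^sup>*\<^sup>* u v)"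

definition is_cycle :: "('e \<Rightarrow> 'v set) \<Rightarrow> 'e set \<Rightarrow> 'e list \<Rightarrow> 'v list \<Rightarrow> bool" where
  "is_cycle r T es vs \<longleftrightarrow> es \<noteq> [] \<and> length vs = Suc (length es) \<and> distinct es \<and>
     set es \<subseteq> T \<and> hd vs = last vs \<and> distinct (butlast vs) \<and>
     (\<forall>i<length es. r (es ! i) = {vs ! i, vs ! Suc i})"

definition acyclic_sub :: "('e \<Rightarrow> 'v set) \<Rightarrow> 'e set \<Rightarrow> bool" where
  "acyclic_sub r T \<longleftrightarrow> \<not> (\<exists>es vs. is_cycle r T es vs)"

definition spanning_tree :: "'v set \<Rightarrow> 'e set \<Rightarrow> ('e \<Rightarrow> 'v set) \<Rightarrow> 'e set \<Rightarrow> bool" where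
  "spanning_tree V E r T \<longleftrightarrow> T \<subseteq> E \<and> connected_sub V r T \<and> acyclic_sub r T"

definition has_k_edge_disjoint_spanning_trees ::
  "'v set \<Rightarrow> 'e set \<Rightarrow> ('e \<Rightarrow> 'v set) \<Rightarrow> nat \<Rightarrow> bool" where
  "has_k_edge_disjoint_spanning_trees V E r k \<longleftrightarrow>
     (\<exists>Ts :: nat \<Rightarrow> 'e set. (\<forall>i<k. spanning_tree V E r (Ts i)) \<and>
        (\<forall>i<k. \<forall>j<k. i \<noteq> j \<longrightarrow> Ts i \<inter> Ts j = {}))"

definition edge_connectivity_ge :: "'v set \<Rightarrow> 'e set \<Rightarrow> ('e \<Rightarrow> 'v set) \<Rightarrow> nat \<Rightarrow> bool" where
  "edge_connectivity_ge V E r k \<longleftrightarrow>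
     (\<forall>F. F \<subseteq> E \<and> card F < k \<longrightarrow> connected_sub V r (E - F))"

end

theory Submission
  imports Defs
begin


lemma rt_lift:
  assumes "\<And>x y. R x y \<Longrightarrow> Q\<^sup>*\<^sup>* x y" and "R\<^sup>*\<^sup>* x y"
  shows "Q\<^sup>*\<^sup>* x y"
  using assms(2) by (induction rule: rtranclp_induct) (auto intro: rtranclp_trans assms(1))

definition blk :: "(nat \<Rightarrow> 'v set) \<Rightarrow> nat \<Rightarrow> 'v \<Rightarrow> 'v \<Rightarrow> bool" where
  "blk W n x y \<longleftrightarrow> (\<exists>i<n. x \<in> W i \<and> y \<in> W i)"

lemma count_lemma:
  assumes "finite X" "finite R" "\<forall>i<n. finite (W i)"
    "\<forall>x\<in>X. \<exists>r\<in>R. (blk W n)\<^sup>*\<^sup>* x r"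
  shows "card X \<le> card R + (\<Sum>i<n. card (W i) - 1)"
  using assms
proof (induction n arbitrary: R)
  case 0
  have "X \<subseteq> R"
  proof
    fix x assume "x \<in> X"
    then obtain r where "r \<in> R" "(blk W 0)\<^sup>*\<^sup>* x r" using 0 by blast
    moreover have "blk W 0 = (\<lambda>_ _. False)" by (auto simp: blk_def fun_eq_iff)
    ultimately show "x \<in> R" by (metis rtranclp.cases)
  qed
  then show ?case using 0 by (simp add: card_mono)
next
  case (Suc n)
  define Z where "Z = {x. \<exists>r\<in>R. (blk W n)\<^sup>*\<^sup>* x r}"
  have stepn: "blk W (Suc n) x y \<Longrightarrow> blk W n x y \<or> (x \<in> W n \<and> y \<in> W n)" for x y
    by (auto simp: blk_def less_Suc_eq)
  show ?case
  proof (cases "\<exists>w\<in>W n. w \<in> Z")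
    case True
    then obtain w where w: "w \<in> W n" "w \<in> Z" by blast
    define R' where "R' = R \<union> (W n - {w})"
    have "\<forall>x\<in>X. \<exists>r\<in>R'. (blk W n)\<^sup>*\<^sup>* x r"
    proof
      fix x assume "x \<in> X"
      then obtain r where r: "r \<in> R" "(blk W (Suc n))\<^sup>*\<^sup>* x r" using Suc.prems by blast
      from r(2) show "\<exists>r\<in>R'. (blk W n)\<^sup>*\<^sup>* x r"
      proof (induction rule: converse_rtranclp_induct)
        case base then show ?case using r(1) R'_def by auto
      next
        case (step x y)
        from stepn[OF step(1)] show ?case
        proof
          assume "blk W n x y" then show ?thesis using step(3)
            by (meson converse_rtranclp_into_rtranclp)
        next
          assume "x \<in> W n \<and> y \<in> W n"
          then show ?thesis using w R'_def Z_def by (cases "x = w") auto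
        qed
      qed
    qed
    then have "card X \<le> card R' + (\<Sum>i<n. card (W i) - 1)"
      using Suc by (simp add: R'_def)
    also have "card R' \<le> card R + (card (W n) - 1)"
    proof -
      have "card R' \<le> card R + card (W n - {w})" unfolding R'_def by (rule card_Un_le)
      then show ?thesis using w by (simp add: card_Diff_singleton)
    qed
    finally show ?thesis by simp
  next
    case False
    have "\<forall>x\<in>X. \<exists>r\<in>R. (blk W n)\<^sup>*\<^sup>* x r"
    proof
      fix x assume "x \<in> X"
      then obtain r where r: "r \<in> R" "(blk W (Suc n))\<^sup>*\<^sup>* x r" using Suc.prems by blast
      from r(2) show "\<exists>r\<in>R. (blk W n)\<^sup>*\<^sup>* x r"
      proof (induction rule: converse_rtranclp_induct)
        case base then show ?case using r(1) by auto
      next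
        case (step x y)
        from stepn[OF step(1)] show ?case
        proof
          assume "blk W n x y" then show ?thesis using step(3)
            by (meson converse_rtranclp_into_rtranclp)
        next
          assume "x \<in> W n \<and> y \<in> W n"
          then show ?thesis using False Z_def step(3) by auto
        qed
      qed
    qed
    then have "card X \<le> card R + (\<Sum>i<n. card (W i) - 1)"
      using Suc by simp
    then show ?thesis by simp
  qed
qed



definition vset :: "'v set \<Rightarrow> ('v + 'e \<Rightarrow> nat) \<Rightarrow> 'v set" where
  "vset V f = {v\<in>V. f (Inl v) = 1}"
definition eset :: "'e set \<Rightarrow> ('v + 'e \<Rightarrow> nat) \<Rightarrow> 'e set" where
  "eset E f = {e\<in>E. f (Inr e) = 1}"
definition ind :: "'v set \<Rightarrow> 'e set \<Rightarrow> 'v + 'e \<Rightarrow> nat" where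
  "ind W T = (\<lambda>y. case y of Inl v \<Rightarrow> if v \<in> W then 1 else 0 | Inr e \<Rightarrow> if e \<in> T then 1 else 0)"

lemma card2_pair:
  assumes "card S = 2" "x \<in> S" "y \<in> S" "x \<noteq> y" shows "S = {x, y}"
  using assms by (auto simp: card_2_iff)

lemma atom_le1:
  assumes "agg_atom V E r f" shows "f y \<le> 1"
proof (rule ccontr)
  assume a: "\<not> f y \<le> 1"
  have ag: "agglomeration V E r f" and nz: "f \<noteq> 0" and ind: "\<forall>b c. agglomeration V E r b \<and> agglomeration V E r c \<and> f = b + c \<longrightarrow> b = 0 \<or> c = 0"
    using assms by (auto simp: agg_atom_def)
  define g where "g = (\<lambda>y. min (f y) 1)"
  define h where "h = (\<lambda>y. f y - 1)"
  have "agglomeration V E r g" using ag unfolding agglomeration_def g_def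
    by (auto simp: min_le_iff_disj)
  moreover have "agglomeration V E r h" using ag unfolding agglomeration_def h_def
    by (metis diff_le_mono zero_diff)
  moreover have "f = g + h" by (auto simp: g_def h_def fun_eq_iff)
  moreover have "g \<noteq> 0" using a by (auto simp: g_def fun_eq_iff intro!: exI[of _ y])
  moreover have "h \<noteq> 0" using a by (auto simp: h_def fun_eq_iff intro!: exI[of _ y])
  ultimately show False using ind by blast
qed

lemma atom_agg: "agg_atom V E r f \<Longrightarrow> agglomeration V E r f"
  by (simp add: agg_atom_def)

lemma agg_vertex_of_nz:
  assumes G: "graph V E r" and ag: "agglomeration V E r f" and "f y \<noteq> 0"
  shows "\<exists>v\<in>V. f (Inl v) \<ge> max 1 (f y)"
proof (cases y)
  case (Inl v)
  then show ?thesis using assms unfolding agglomeration_def by (auto intro!: bexI[of _ v])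
next
  case (Inr e)
  have "e \<in> E" using assms Inr unfolding agglomeration_def by auto
  then have "r e \<noteq> {}" "r e \<subseteq> V" using G unfolding graph_def by auto
  then obtain v where "v \<in> r e" "v \<in> V" by auto
  then show ?thesis using ag Inr \<open>e \<in> E\<close> assms(3) unfolding agglomeration_def
    by (auto intro!: bexI[of _ v])
qed

lemma atom_vset_ne:
  assumes G: "graph V E r" and "agg_atom V E r f" shows "vset V f \<noteq> {}"
proof -
  obtain y where "f y \<noteq> 0" using assms by (auto simp: agg_atom_def fun_eq_iff)
  then obtain v where "v \<in> V" "f (Inl v) \<ge> 1" using agg_vertex_of_nz[OF G atom_agg[OF assms(2)]]
    by (meson max.bounded_iff)
  moreover have "f (Inl v) \<le> 1" using atom_le1[OF assms(2)] .
  ultimately show ?thesis by (auto simp: vset_def)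
qed

lemma atom_conn:
  assumes G: "graph V E r" and at: "agg_atom V E r f" and u: "u \<in> vset V f" and w: "w \<in> vset V f"
  shows "(adj r (eset E f))\<^sup>*\<^sup>* u w"
proof (rule ccontr)
  assume nc: "\<not> (adj r (eset E f))\<^sup>*\<^sup>* u w"
  have ag: "agglomeration V E r f" and ind: "\<forall>b c. agglomeration V E r b \<and> agglomeration V E r c \<and> f = b + c \<longrightarrow> b = 0 \<or> c = 0"
    using at by (auto simp: agg_atom_def)
  have le1: "f y \<le> 1" for y using atom_le1[OF at] .
  define C where "C = {x. (adj r (eset E f))\<^sup>*\<^sup>* u x}"
  define P where "P = (\<lambda>y. case y of Inl x \<Rightarrow> x \<in> C | Inr e \<Rightarrow> r e \<inter> C \<noteq> {})"
  define g where "g = (\<lambda>y. if P y then f y else 0)"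
  define h where "h = (\<lambda>y. if P y then 0 else f y)"
  have closed: "v \<in> C" if "e \<in> E" "v \<in> r e" "x \<in> r e" "x \<in> C" "f (Inr e) \<noteq> 0" for e v x
  proof (cases "v = x")
    case True then show ?thesis using that by simp
  next
    case False
    have "card (r e) = 2" using G that unfolding graph_def by auto
    then have "r e = {x, v}" using card2_pair that False by metis
    moreover have "e \<in> eset E f" using that le1[of "Inr e"] by (auto simp: eset_def)
    ultimately have "adj r (eset E f) x v" by (auto simp: adj_def)
    then show ?thesis using that(4) by (auto simp: C_def)
  qed
  have "agglomeration V E r g"
    unfolding agglomeration_def
  proof (intro conjI allI impI ballI)
    fix x assume "x \<notin> Inl ` V \<union> Inr ` E" then show "g x = 0" using ag by (auto simp: g_def agglomeration_def)
  next
    fix e v assume ev: "e \<in> E" "v \<in> r e"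
    show "g (Inr e) \<le> g (Inl v)"
    proof (cases "P (Inr e) \<and> f (Inr e) \<noteq> 0")
      case True
      then obtain x where "x \<in> r e" "x \<in> C" by (auto simp: P_def)
      then have "v \<in> C" using closed ev True by blast
      then show ?thesis using ag ev True by (auto simp: g_def P_def agglomeration_def)
    next
      case False then show ?thesis by (auto simp: g_def)
    qed
  qed
  moreover have "agglomeration V E r h"
    unfolding agglomeration_def
  proof (intro conjI allI impI ballI)
    fix x assume "x \<notin> Inl ` V \<union> Inr ` E" then show "h x = 0" using ag by (auto simp: h_def agglomeration_def)
  next
    fix e v assume ev: "e \<in> E" "v \<in> r e"
    show "h (Inr e) \<le> h (Inl v)"
      using ag ev by (auto simp: h_def P_def agglomeration_def)
  qed
  moreover have "f = g + h" by (auto simp: g_def h_def fun_eq_iff)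
  moreover have "g \<noteq> 0"
  proof -
    have "P (Inl u)" by (simp add: P_def C_def)
    then have "g (Inl u) = 1" using u by (simp add: g_def vset_def)
    then show ?thesis by (auto simp: fun_eq_iff intro!: exI[of _ "Inl u"])
  qed
  moreover have "h \<noteq> 0"
  proof -
    have "\<not> P (Inl w)" using nc by (simp add: P_def C_def)
    then have "h (Inl w) = 1" using w by (simp add: h_def vset_def)
    then show ?thesis by (auto simp: fun_eq_iff intro!: exI[of _ "Inl w"])
  qed
  ultimately show False using ind by blast
qed

lemma ind_atom:
  assumes G: "graph V E r" and W: "W \<subseteq> V" "W \<noteq> {}" and T: "T \<subseteq> E" "\<forall>e\<in>T. r e \<subseteq> W"
    and con: "connected_sub W r T"
  shows "agg_atom V E r (ind W T)"
  unfolding agg_atom_def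
proof (intro conjI allI impI)
  show ag: "agglomeration V E r (ind W T)"
    using W T unfolding agglomeration_def ind_def by (auto split: sum.splits)
  obtain w0 where "w0 \<in> W" using W by auto
  then show "ind W T \<noteq> 0" by (auto simp: ind_def fun_eq_iff intro!: exI[of _ "Inl w0"])
  fix b c assume bc: "agglomeration V E r b \<and> agglomeration V E r c \<and> ind W T = b + c"
  show "b = 0 \<or> c = 0"
  proof (rule ccontr)
    assume "\<not> (b = 0 \<or> c = 0)"
    then obtain yb yc where "b yb \<noteq> 0" "c yc \<noteq> 0" by (auto simp: fun_eq_iff)
    then obtain u v where u: "u \<in> V" "b (Inl u) \<ge> 1" and v: "v \<in> V" "c (Inl v) \<ge> 1"
      using agg_vertex_of_nz[OF G] bc by (metis max.bounded_iff)
    have val: "b y + c y = ind W T y" for y using bc by (simp add: fun_eq_iff)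
    have uW: "u \<in> W" using val[of "Inl u"] u by (auto simp: ind_def split: if_splits)
    have vW: "v \<in> W" using val[of "Inl v"] v by (auto simp: ind_def split: if_splits)
    have path: "(adj r T)\<^sup>*\<^sup>* u v" using con uW vW by (auto simp: connected_sub_def)
    have "b (Inl v) \<ge> 1" using path
    proof (induction rule: rtranclp_induct)
      case base then show ?case using u by simp
    next
      case (step x y)
      then obtain e where e: "e \<in> T" "r e = {x, y}" by (auto simp: adj_def)
      have "x \<in> W" using e T by auto
      then have "c (Inl x) = 0" using val[of "Inl x"] step(3) by (auto simp: ind_def)
      moreover have "c (Inr e) \<le> c (Inl x)" using bc e T unfolding agglomeration_def by auto
      ultimately have "b (Inr e) = 1" using val[of "Inr e"] e by (auto simp: ind_def)
      moreover have "b (Inr e) \<le> b (Inl y)" using bc e T unfolding agglomeration_def by auto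
      ultimately show ?case by simp
    qed
    then show False using val[of "Inl v"] v by (auto simp: ind_def split: if_splits)
  qed
qed



lemma sum01_card:
  fixes f :: "'a \<Rightarrow> nat"
  assumes "finite A" "\<forall>x\<in>A. f x \<le> 1"
  shows "(\<Sum>x\<in>A. f x) = card {x\<in>A. f x = 1}"
proof -
  have "(\<Sum>x\<in>A. f x) = (\<Sum>x\<in>A. if f x = 1 then 1 else 0)"
    using assms(2) by (intro sum.cong) (auto simp: le_Suc_eq)
  also have "\<dots> = card {x\<in>A. f x = 1}"
    using assms(1) by (simp add: sum.If_cases Int_def)
  finally show ?thesis .
qed

lemma sum_ex_nz: "(\<Sum>i\<in>F. (f i::nat)) \<noteq> 0 \<Longrightarrow> \<exists>i\<in>F. f i \<noteq> 0"
  by (metis sum.neutral)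

lemma atom_vsum:
  assumes "finite V" "agg_atom V E r f"
  shows "(\<Sum>v\<in>V. f (Inl v)) = card (vset V f)"
  using sum01_card[of V "\<lambda>v. f (Inl v)"] assms atom_le1[OF assms(2)] by (simp add: vset_def)

lemma core:
  fixes A B :: "nat \<Rightarrow> 'v + 'e \<Rightarrow> nat" and V :: "'v set"
  assumes G: "graph V E r" and k: "k \<ge> 2"
    and At: "\<forall>j<k. agg_atom V E r (A j)" and Bt: "\<forall>i<n. agg_atom V E r (B i)"
    and S: "\<forall>y. (\<Sum>j<k. A j y) = (\<Sum>i<n. B i y)"
  shows "n \<le> (k-1) * card V + 1 \<and>
     (n = (k-1) * card V + 1 \<longrightarrow> (\<forall>j<k. vset V (A j) = V) \<and> (\<forall>e\<in>E. (\<Sum>j<k. A j (Inr e)) \<le> 1))"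
proof -
  define a where "a = (\<lambda>y. \<Sum>i<n. B i y)"
  define W where "W = (\<lambda>i. vset V (B i))"
  define U where "U = (\<lambda>j. vset V (A j))"
  define X where "X = {v\<in>V. a (Inl v) > 0}"
  define M where "M = (\<Sum>v\<in>V. a (Inl v))"
  have finV: "finite V" using G by (simp add: graph_def)
  have aA: "a y = (\<Sum>j<k. A j y)" for y using S by (simp add: a_def)
  have finX: "finite X" using finV by (simp add: X_def)
  have XV: "X \<subseteq> V" by (auto simp: X_def)
  have finW: "\<forall>i<n. finite (W i)" using finV by (simp add: W_def vset_def)
  have WV: "W i \<subseteq> V" for i by (auto simp: W_def vset_def)
  have UV: "U j \<subseteq> V" for j by (auto simp: U_def vset_def)
  have MW: "M = (\<Sum>i<n. card (W i))"
  proof -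
    have "M = (\<Sum>i<n. \<Sum>v\<in>V. B i (Inl v))" unfolding M_def a_def by (rule sum.swap)
    also have "\<dots> = (\<Sum>i<n. card (W i))" using Bt by (intro sum.cong) (auto simp: W_def intro!: atom_vsum[OF finV])
    finally show ?thesis .
  qed
  have MU: "M = (\<Sum>j<k. card (U j))"
  proof -
    have "M = (\<Sum>j<k. \<Sum>v\<in>V. A j (Inl v))" unfolding M_def aA by (rule sum.swap)
    also have "\<dots> = (\<Sum>j<k. card (U j))" using At by (intro sum.cong) (auto simp: U_def intro!: atom_vsum[OF finV])
    finally show ?thesis .
  qed
  have Wne: "W i \<noteq> {}" if "i < n" for i using atom_vset_ne[OF G] Bt that by (simp add: W_def)
  have Une: "U j \<noteq> {}" if "j < k" for j using atom_vset_ne[OF G] At that by (simp add: U_def)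
  have UX: "U j \<subseteq> X" if "j < k" for j
  proof
    fix v assume v: "v \<in> U j"
    then have "A j (Inl v) = 1" "v \<in> V" by (auto simp: U_def vset_def)
    moreover have "A j (Inl v) \<le> a (Inl v)" unfolding aA using that by (intro member_le_sum) auto
    ultimately show "v \<in> X" by (auto simp: X_def)
  qed
  have XU: "\<exists>j<k. v \<in> U j" if "v \<in> X" for v
  proof -
    have pos: "(\<Sum>j<k. A j (Inl v)) > 0" using that aA by (simp add: X_def)
    have "\<exists>j\<in>{..<k}. A j (Inl v) \<noteq> 0" by (rule sum_ex_nz) (use pos in linarith)
    then obtain j where j: "j < k" "A j (Inl v) \<noteq> 0" by blast
    then have "A j (Inl v) = 1" using atom_le1[of V E r "A j" "Inl v"] At by simp
    then show ?thesis using j that by (auto simp: U_def vset_def X_def)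
  qed
  have edgeB: "\<exists>i<n. r e \<subseteq> W i \<and> B i (Inr e) = 1" if ee: "e \<in> E" and ae: "a (Inr e) \<ge> 1" for e
  proof -
    have "\<exists>i\<in>{..<n}. B i (Inr e) \<noteq> 0"
      by (rule sum_ex_nz) (use ae in \<open>unfold a_def, linarith\<close>)
    then obtain i where i: "i < n" "B i (Inr e) \<noteq> 0" by blast
    then have b1: "B i (Inr e) = 1" using atom_le1[of V E r "B i" "Inr e"] Bt by simp
    have "r e \<subseteq> W i"
    proof
      fix v assume "v \<in> r e"
      moreover have "agglomeration V E r (B i)" using atom_agg Bt i by blast
      ultimately have "B i (Inl v) \<ge> 1" "v \<in> V" using b1 ee G
        unfolding agglomeration_def graph_def by force+
      then show "v \<in> W i" using atom_le1[of V E r "B i" "Inl v"] Bt i by (simp add: W_def vset_def)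
    qed
    then show ?thesis using i b1 by auto
  qed
  have conn: "(blk W n)\<^sup>*\<^sup>* u w" if "j < k" "u \<in> U j" "w \<in> U j" for j u w
  proof -
    have "(adj r (eset E (A j)))\<^sup>*\<^sup>* u w" using atom_conn[OF G] At that by (simp add: U_def)
    then show ?thesis
    proof (rule rt_lift[rotated])
      fix x y assume "adj r (eset E (A j)) x y"
      then obtain e where e: "e \<in> E" "A j (Inr e) = 1" "r e = {x, y}" by (auto simp: adj_def eset_def)
      have "A j (Inr e) \<le> a (Inr e)" unfolding aA using that by (intro member_le_sum) auto
      then obtain i where "i < n" "r e \<subseteq> W i" using edgeB e by fastforce
      then show "(blk W n)\<^sup>*\<^sup>* x y" using e by (intro r_into_rtranclp) (auto simp: blk_def)
    qed
  qed
  have sumW: "(\<Sum>i<n. card (W i) - 1) + n = M"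
  proof -
    have "(\<Sum>i<n. card (W i) - 1) + n = (\<Sum>i<n. card (W i) - 1 + 1)" unfolding sum.distrib by simp
    also have "\<dots> = (\<Sum>i<n. card (W i))" using Wne finW by (intro sum.cong) (auto simp: Suc_le_eq card_gt_0_iff)
    finally show ?thesis using MW by simp
  qed
  have mainineq: "card X + n \<le> card R + M" if "finite R" "\<forall>x\<in>X. \<exists>r\<in>R. (blk W n)\<^sup>*\<^sup>* x r" for R
    using count_lemma[OF finX that(1) finW that(2)] sumW by linarith
  have MkX: "M \<le> k * card X"
  proof -
    have "M \<le> (\<Sum>j<k. card X)" unfolding MU using UX finX by (intro sum_mono card_mono) auto
    then show ?thesis by simp
  qed
  have cXV: "card X \<le> card V" using XV finV by (simp add: card_mono)
  have X0: "card X \<ge> 1"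
  proof -
    have "U 0 \<noteq> {}" "U 0 \<subseteq> X" using Une UX k by auto
    then have "X \<noteq> {}" by blast
    then show ?thesis using finX by (simp add: Suc_le_eq card_gt_0_iff)
  qed
  show ?thesis
  proof (cases "\<exists>j<k. U j = X")
    case True
    then obtain j where j: "j < k" "U j = X" by blast
    then obtain v0 where v0: "v0 \<in> X" using Une by blast
    have allv0: "\<forall>x\<in>X. (blk W n)\<^sup>*\<^sup>* x v0" using conn j v0 by auto
    have ineq: "card X + n \<le> 1 + M" using mainineq[of "{v0}"] allv0 by auto
    have kk: "k * card X = (k-1) * card X + card X" using k by (cases k) auto
    have kV: "(k-1) * card X \<le> (k-1) * card V" using cXV by simp
    have bound: "n \<le> (k-1) * card V + 1" using ineq MkX kk kV by linarith
    moreover have "(\<forall>j<k. vset V (A j) = V) \<and> (\<forall>e\<in>E. (\<Sum>j<k. A j (Inr e)) \<le> 1)"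
      if eq: "n = (k-1) * card V + 1"
    proof -
      have "(k-1)*card V \<le> (k-1)*card X" using ineq MkX kk eq by linarith
      moreover have k1: "0 < k - 1" using k by simp
      ultimately have cVX: "card V \<le> card X" using mult_le_cancel1[of "k-1" "card V" "card X"] by blast
      have XeqV: "X = V" by (rule card_subset_eq[OF finV XV]) (use cVX cXV in linarith)
      have kV2: "k * card V = (k-1) * card V + card V" using k by (cases k) auto
      have Mge: "k * card V \<le> M" using ineq eq kV2 unfolding XeqV by linarith
      have Uall: "U j = V" if "j < k" for j
      proof (rule ccontr)
        assume "U j \<noteq> V"
        then have "card (U j) < card V" using UV finV by (meson psubsetI psubset_card_mono)
        then have "(\<Sum>j<k. card (U j)) < (\<Sum>j<k. card V)"
          using that UV finV by (intro sum_strict_mono_ex1) (auto simp: card_mono)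
        then show False using Mge MU by simp
      qed
      have Ebound: "(\<Sum>j<k. A j (Inr e)) \<le> 1" if e: "e \<in> E" for e
      proof (rule ccontr)
        assume "\<not> (\<Sum>j<k. A j (Inr e)) \<le> 1"
        then have a2: "a (Inr e) \<ge> 2" using aA by simp
        define I where "I = {i\<in>{..<n}. B i (Inr e) = 1}"
        have "a (Inr e) = card I" unfolding a_def I_def
          using Bt atom_le1[of V E r] by (intro sum01_card) (auto simp del: One_nat_def)
        then have cI: "card I \<ge> 2" using a2 by simp
        then have "I \<noteq> {}" by auto
        then obtain i where i: "i \<in> I" by blast
        have "card (I - {i}) \<ge> 1" using cI i by (simp add: card_Diff_singleton)
        then have "I - {i} \<noteq> {}" by (metis card.empty not_one_le_zero)
        then obtain l where l: "l \<in> I" "l \<noteq> i" by blast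
        have il: "i < n" "l < n" "B i (Inr e) = 1" "B l (Inr e) = 1" using i l by (auto simp: I_def)
        have "card (r e) = 2" using G e by (simp add: graph_def)
        then obtain u v where uv: "r e = {u, v}" "u \<noteq> v" by (auto simp: card_2_iff)
        have reW: "r e \<subseteq> W m" if "m < n" "B m (Inr e) = 1" for m
        proof
          fix x assume "x \<in> r e"
          moreover have "agglomeration V E r (B m)" using atom_agg Bt that by blast
          ultimately have "B m (Inl x) \<ge> 1" "x \<in> V" using that e G
            unfolding agglomeration_def graph_def by force+
          then show "x \<in> W m" using atom_le1[of V E r "B m" "Inl x"] Bt that by (simp add: W_def vset_def)
        qed
        have uvi: "u \<in> W i" "v \<in> W i" and uvl: "u \<in> W l" "v \<in> W l"
          using reW[OF il(1,3)] reW[OF il(2,4)] uv by auto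
        define W' where "W' = W(l := W l - {v})"
        have zl: "blk W' n z u \<and> blk W' n u z" if "z \<in> W l" for z
        proof (cases "z = v")
          case True then show ?thesis using uvi il l(2) uv(2) by (auto simp: blk_def W'_def intro!: exI[of _ i])
        next
          case False then show ?thesis using that uvl il l(2) uv(2) by (auto simp: blk_def W'_def intro!: exI[of _ l])
        qed
        have lift: "(blk W' n)\<^sup>*\<^sup>* x y" if bxy: "blk W n x y" for x y
        proof -
          obtain m where m: "m < n" "x \<in> W m" "y \<in> W m" using bxy by (auto simp: blk_def)
          show ?thesis
          proof (cases "m = l")
            case True
            then have "blk W' n x u" "blk W' n u y" using zl m by auto
            then show ?thesis by (meson rtranclp.rtrancl_into_rtrancl rtranclp.rtrancl_refl)
          next
            case False
            then have "blk W' n x y" using m by (auto simp: blk_def W'_def)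
            then show ?thesis by simp
          qed
        qed
        have "\<forall>x\<in>X. \<exists>r\<in>{v0}. (blk W' n)\<^sup>*\<^sup>* x r" using allv0 rt_lift[OF lift] by blast
        moreover have "\<forall>i<n. finite (W' i)" using finW by (simp add: W'_def)
        ultimately have c1: "card X \<le> card {v0} + (\<Sum>m<n. card (W' m) - 1)"
          using count_lemma[OF finX] by blast
        have cWl: "card (W l) \<ge> 2"
        proof -
          have "card {u, v} \<le> card (W l)" using uvl finW il by (intro card_mono) auto
          then show ?thesis using uv by simp
        qed
        have s1: "(\<Sum>m<n. card (W' m) - 1) = (card (W' l) - 1) + (\<Sum>m\<in>{..<n}-{l}. card (W m) - 1)"
        proof -
          have "(\<Sum>m<n. card (W' m) - 1) = (card (W' l) - 1) + (\<Sum>m\<in>{..<n}-{l}. card (W' m) - 1)"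
            using il by (simp add: sum.remove[of "{..<n}" l])
          moreover have "(\<Sum>m\<in>{..<n}-{l}. card (W' m) - 1) = (\<Sum>m\<in>{..<n}-{l}. card (W m) - 1)"
            by (intro sum.cong) (auto simp: W'_def)
          ultimately show ?thesis by simp
        qed
        have s2: "(\<Sum>m<n. card (W m) - 1) = (card (W l) - 1) + (\<Sum>m\<in>{..<n}-{l}. card (W m) - 1)"
          using il by (simp add: sum.remove[of "{..<n}" l])
        have s3: "card (W' l) = card (W l) - 1"
          using uvl finW il by (simp add: W'_def card_Diff_singleton)
        have "(\<Sum>m<n. card (W' m) - 1) + 1 = (\<Sum>m<n. card (W m) - 1)"
          using s1 s2 s3 cWl by arith
        then have "card X + n \<le> M" using c1 sumW by simp
        then show False using eq Mge MkX kV2 kk unfolding XeqV by linarith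
      qed
      show ?thesis using Uall Ebound by (simp add: U_def)
    qed
    ultimately show ?thesis by blast
  next
    case False
    define rep where "rep = (\<lambda>j. SOME v. v \<in> U j)"
    have rep: "rep j \<in> U j" if "j < k" for j using Une[OF that] by (simp add: rep_def some_in_eq)
    have "\<forall>x\<in>X. \<exists>r\<in>rep ` {..<k}. (blk W n)\<^sup>*\<^sup>* x r"
    proof
      fix x assume "x \<in> X"
      then obtain j where "j < k" "x \<in> U j" using XU by blast
      then show "\<exists>r\<in>rep ` {..<k}. (blk W n)\<^sup>*\<^sup>* x r" using conn rep by blast
    qed
    then have "card X + n \<le> card (rep ` {..<k}) + M" using mainineq by blast
    moreover have "card (rep ` {..<k}) \<le> k" using card_image_le[of "{..<k}" rep] by simp
    moreover have "M \<le> k * (card X - 1)"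
    proof -
      have "card (U j) \<le> card X - 1" if "j < k" for j
      proof -
        have "U j \<subset> X" using UX False that by auto
        then have "card (U j) < card X" using finX by (simp add: psubset_card_mono)
        then show ?thesis by simp
      qed
      then have "M \<le> (\<Sum>j<k. card X - 1)" unfolding MU by (intro sum_mono) auto
      then show ?thesis by simp
    qed
    moreover have "k * (card X - 1) + k = (k - 1) * card X + card X"
      using X0 k by (cases k; cases "card X") (auto simp: algebra_simps)
    moreover have "(k-1) * card X \<le> (k-1) * card V" using cXV by simp
    ultimately show ?thesis by linarith
  qed
qed



lemma adj_sym: "adj r T x y \<Longrightarrow> adj r T y x"
  by (auto simp: adj_def insert_commute)

lemma rt_adj_sym: "(adj r T)\<^sup>*\<^sup>* x y \<Longrightarrow> (adj r T)\<^sup>*\<^sup>* y x"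
  by (induction rule: rtranclp_induct) (auto intro: converse_rtranclp_into_rtranclp adj_sym)

lemma adj_mono: "T \<subseteq> T' \<Longrightarrow> adj r T x y \<Longrightarrow> adj r T' x y"
  by (auto simp: adj_def)

lemma conn_mono:
  assumes "T \<subseteq> T'" "connected_sub V r T" shows "connected_sub V r T'"
  unfolding connected_sub_def
proof (intro ballI)
  fix u v assume "u \<in> V" "v \<in> V"
  then have "(adj r T)\<^sup>*\<^sup>* u v" using assms(2) by (auto simp: connected_sub_def)
  then show "(adj r T')\<^sup>*\<^sup>* u v"
    by (rule rt_lift[rotated]) (auto intro: r_into_rtranclp adj_mono[OF assms(1)])
qed

lemma tree_exists:
  assumes fin: "finite T" and con: "connected_sub V r T" and TE: "T \<subseteq> E"
  shows "\<exists>S\<subseteq>T. spanning_tree V E r S"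
proof -
  obtain S where S: "S \<subseteq> T \<and> connected_sub V r S"
    and min: "\<forall>S'. S' \<subseteq> T \<and> connected_sub V r S' \<longrightarrow> card S \<le> card S'"
    using ex_has_least_nat[of "\<lambda>S. S \<subseteq> T \<and> connected_sub V r S" T card] con by blast
  have "acyclic_sub r S"
    unfolding acyclic_sub_def
  proof (rule notI, elim exE)
    fix es vs assume cyc: "is_cycle r S es vs"
    define L where "L = length es"
    define e0 where "e0 = es ! 0"
    define S' where "S' = S - {e0}"
    have L1: "L \<ge> 1" and lvs: "length vs = Suc L" and hl: "hd vs = last vs" and des: "distinct es"
      and ses: "set es \<subseteq> S" and red: "\<forall>i<L. r (es ! i) = {vs ! i, vs ! Suc i}"
      using cyc by (auto simp: is_cycle_def L_def Suc_le_eq)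
    have "es ! 0 \<in> set es" using L1 unfolding L_def by (intro nth_mem) (simp add: Suc_le_eq)
    then have e0S: "e0 \<in> S" using ses by (auto simp: e0_def)
    have path: "1 \<le> m \<longrightarrow> m \<le> L \<longrightarrow> (adj r S')\<^sup>*\<^sup>* (vs ! 1) (vs ! m)" for m
    proof (induction m)
      case 0 then show ?case by simp
    next
      case (Suc m)
      show ?case
      proof (cases "m = 0")
        case True then show ?thesis by simp
      next
        case False
        show ?thesis
        proof (intro impI)
          assume "Suc m \<le> L"
          then have mL: "m < L" by simp
          then have IH: "(adj r S')\<^sup>*\<^sup>* (vs ! 1) (vs ! m)" using Suc False by simp
          have "es ! m \<noteq> e0" using des mL False unfolding e0_def L_def by (subst nth_eq_iff_index_eq) auto
          moreover have "es ! m \<in> S" using ses mL by (auto simp: L_def)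
          ultimately have "adj r S' (vs ! m) (vs ! Suc m)" using red mL by (auto simp: adj_def S'_def)
          then show "(adj r S')\<^sup>*\<^sup>* (vs ! 1) (vs ! Suc m)" using IH by simp
        qed
      qed
    qed
    have "vs \<noteq> []" using lvs by auto
    then have "vs ! L = vs ! 0" using hl lvs by (simp add: hd_conv_nth last_conv_nth)
    then have p10: "(adj r S')\<^sup>*\<^sup>* (vs ! 1) (vs ! 0)" using path[of L] L1 by simp
    have p01: "(adj r S')\<^sup>*\<^sup>* (vs ! 0) (vs ! 1)" using rt_adj_sym[OF p10] .
    have re0: "r e0 = {vs ! 0, vs ! 1}" using red L1 by (simp add: e0_def)
    have step: "(adj r S')\<^sup>*\<^sup>* x y" if axy: "adj r S x y" for x y
    proof -
      obtain e where e: "e \<in> S" "r e = {x, y}" using axy by (auto simp: adj_def)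
      show ?thesis
      proof (cases "e = e0")
        case True
        then have "{x, y} = {vs ! 0, vs ! 1}" using e re0 by simp
        then show ?thesis using p10 p01 by (auto simp: doubleton_eq_iff)
      next
        case False
        then have "adj r S' x y" using e by (auto simp: adj_def S'_def)
        then show ?thesis by simp
      qed
    qed
    have "connected_sub V r S'" using S rt_lift[OF step] unfolding connected_sub_def by blast
    moreover have "S' \<subseteq> T" using S by (auto simp: S'_def)
    moreover have "card S' < card S"
    proof -
      have "finite S" using S fin finite_subset by blast
      then show ?thesis using e0S unfolding S'_def by (rule card_Diff1_less)
    qed
    ultimately show False using min[rule_format, of S'] by linarith
  qed
  then show ?thesis using S TE by (auto simp: spanning_tree_def)
qed

lemma trees_edge_conn:
  assumes finE: "finite E" and Ts: "\<forall>i<k. spanning_tree V E r (Ts i)"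
    and dis: "\<forall>i<k. \<forall>j<k. i \<noteq> j \<longrightarrow> Ts i \<inter> Ts j = {}"
  shows "edge_connectivity_ge V E r k"
  unfolding edge_connectivity_ge_def
proof (intro allI impI)
  fix F assume F: "F \<subseteq> E \<and> card F < k"
  show "connected_sub V r (E - F)"
  proof (cases "\<exists>j<k. Ts j \<inter> F = {}")
    case True
    then obtain j where "j < k" "Ts j \<inter> F = {}" by blast
    then have h1: "Ts j \<subseteq> E - F" and h2: "connected_sub V r (Ts j)" using Ts by (auto simp: spanning_tree_def)
    show ?thesis using conn_mono[OF h1 h2] .
  next
    case False
    define g where "g = (\<lambda>j. SOME f. f \<in> Ts j \<inter> F)"
    have g: "g j \<in> Ts j \<inter> F" if "j < k" for j
    proof -
      have "\<exists>f. f \<in> Ts j \<inter> F" using False that by blast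
      then show ?thesis unfolding g_def by (rule someI_ex)
    qed
    have "inj_on g {..<k}"
    proof (rule inj_onI)
      fix i j assume ij: "i \<in> {..<k}" "j \<in> {..<k}" "g i = g j"
      show "i = j"
      proof (rule ccontr)
        assume "i \<noteq> j"
        then have "Ts i \<inter> Ts j = {}" using dis ij by simp
        moreover have "g i \<in> Ts i" "g i \<in> Ts j" using g[of i] g[of j] ij by auto
        ultimately show False by blast
      qed
    qed
    moreover have "g ` {..<k} \<subseteq> F" using g by auto
    moreover have "finite F" using F finE finite_subset by blast
    ultimately have "card {..<k} \<le> card F" by (meson card_inj_on_le)
    then show ?thesis using F by simp
  qed
qed

lemma sl_apply: "sum_list xs y = sum_list (map (\<lambda>f. f y) xs)"
  by (induction xs) auto

lemma sl_nth: "sum_list xs y = (\<Sum>i<length xs. (xs ! i) y)"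
proof -
  have "sum_list xs y = sum_list (map (\<lambda>f. f y) xs)" by (rule sl_apply)
  also have "\<dots> = (\<Sum>i<length xs. (xs ! i) y)" by (simp add: sum_list_sum_nth atLeast0LessThan)
  finally show ?thesis .
qed

lemma agg_sum_list:
  "(\<forall>f\<in>set xs. agglomeration V E r f) \<Longrightarrow> agglomeration V E r (sum_list xs)"
proof (induction xs)
  case Nil then show ?case by (simp add: agglomeration_def)
next
  case (Cons f xs)
  then show ?case by (auto simp: agglomeration_def intro: add_mono)
qed

lemma core_lists:
  assumes G: "graph V E r" and k: "k \<ge> 2"
    and As: "length As = k" "\<forall>f\<in>set As. agg_atom V E r f"
    and Bs: "\<forall>f\<in>set Bs. agg_atom V E r f" and eq: "sum_list As = sum_list Bs"
  shows "length Bs \<le> (k-1) * card V + 1 \<and>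
     (length Bs = (k-1) * card V + 1 \<longrightarrow> (\<forall>j<k. vset V (As ! j) = V) \<and>
        (\<forall>e\<in>E. (\<Sum>j<k. (As ! j) (Inr e)) \<le> 1))"
proof (rule core[OF G k])
  show "\<forall>j<k. agg_atom V E r (As ! j)" using As by auto
  show "\<forall>i<length Bs. agg_atom V E r (Bs ! i)" using Bs by auto
  show "\<forall>y. (\<Sum>j<k. (As ! j) y) = (\<Sum>i<length Bs. (Bs ! i) y)"
  proof
    fix y show "(\<Sum>j<k. (As ! j) y) = (\<Sum>i<length Bs. (Bs ! i) y)"
      using fun_cong[OF eq, of y] As by (simp add: sl_nth)
  qed
qed

lemma sl_concat_rep: "sum_list (map g (concat (replicate m xs))) = m * sum_list (map g xs)"
  for g :: "'a \<Rightarrow> nat"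
  by (induction m) auto



lemma len_concat_rep: "length (concat (replicate m xs)) = m * length xs"
  by (induction m) auto

lemma sum_indicator_disj:
  fixes k :: nat
  assumes dis: "\<forall>i<k. \<forall>j<k. i \<noteq> j \<longrightarrow> Ts i \<inter> Ts j = {}"
  shows "(\<Sum>j<k. (if e \<in> Ts j then 1 else 0::nat)) = (if e \<in> \<Union> (Ts ` {..<k}) then 1 else 0)"
proof (cases "e \<in> \<Union> (Ts ` {..<k})")
  case True
  then obtain j0 where j0: "j0 < k" "e \<in> Ts j0" by auto
  have "(\<Sum>j<k. (if e \<in> Ts j then 1 else 0::nat)) = (\<Sum>j<k. (if j = j0 then 1 else 0))"
  proof (intro sum.cong refl)
    fix j assume "j \<in> {..<k}"
    then show "(if e \<in> Ts j then 1 else 0::nat) = (if j = j0 then 1 else 0)"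
      using dis j0 by auto
  qed
  also have "\<dots> = 1" using j0 by (simp add: sum.If_cases)
  finally show ?thesis using True by simp
next
  case False
  then show ?thesis by auto
qed

lemma construct:
  assumes G: "graph V E r" and Vne: "V \<noteq> {}" and k: "k \<ge> 2"
    and Ts: "\<forall>i<k. spanning_tree V E r (Ts i)"
    and dis: "\<forall>i<k. \<forall>j<k. i \<noteq> j \<longrightarrow> Ts i \<inter> Ts j = {}"
  shows "\<exists>a. agglomeration V E r a \<and> k \<in> agg_lengths V E r a \<and>
             (k-1) * card V + 1 \<in> agg_lengths V E r a"
proof -
  have finV: "finite V" using G by (simp add: graph_def)
  obtain vl where vl: "set vl = V" "distinct vl" using finite_distinct_list[OF finV] by blast
  define U where "U = \<Union> (Ts ` {..<k})"
  define As where "As = map (\<lambda>j. ind V (Ts j)) [0..<k]"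
  define Bs where "Bs = ind V U # concat (replicate (k-1) (map (\<lambda>v. ind {v} {}) vl))"
  have reV: "\<forall>e\<in>E. r e \<subseteq> V" using G by (simp add: graph_def)
  have TsE: "Ts j \<subseteq> E" "connected_sub V r (Ts j)" if "j < k" for j
    using Ts that by (auto simp: spanning_tree_def)
  have UE: "U \<subseteq> E" using TsE by (auto simp: U_def)
  have atA: "\<forall>f\<in>set As. agg_atom V E r f"
  proof
    fix f assume "f \<in> set As"
    then obtain j where j: "j < k" "f = ind V (Ts j)" by (auto simp: As_def)
    show "agg_atom V E r f" unfolding j(2)
      by (rule ind_atom[OF G subset_refl Vne TsE(1)[OF j(1)] _ TsE(2)[OF j(1)]]) (use reV TsE(1)[OF j(1)] in blast)
  qed
  have k0: "0 < k" using k by simp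
  have atBig: "agg_atom V E r (ind V U)"
  proof (rule ind_atom[OF G subset_refl Vne UE])
    show "\<forall>e\<in>U. r e \<subseteq> V" using reV UE by blast
    have "Ts 0 \<subseteq> U" using k0 by (auto simp: U_def)
    then show "connected_sub V r U" using conn_mono TsE(2)[OF k0] by blast
  qed
  have atSing: "agg_atom V E r (ind {v} {})" if "v \<in> V" for v
  proof (rule ind_atom[OF G])
    show "connected_sub {v} r {}" by (simp add: connected_sub_def)
  qed (use that in auto)
  have atB: "\<forall>f\<in>set Bs. agg_atom V E r f"
  proof
    fix f assume "f \<in> set Bs"
    then have "f = ind V U \<or> (\<exists>v\<in>V. f = ind {v} {})" using vl
      by (auto simp: Bs_def split: if_splits)
    then show "agg_atom V E r f" using atBig atSing by blast
  qed
  have LA: "sum_list As y = (\<Sum>j<k. ind V (Ts j) y)" for y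
    by (simp add: sl_nth As_def)
  have LB: "sum_list Bs y = ind V U y + (k-1) * (\<Sum>v\<in>V. ind {v} {} y)" for y
  proof -
    have "sum_list Bs y = ind V U y + sum_list (map (\<lambda>f. f y) (concat (replicate (k-1) (map (\<lambda>v. ind {v} {}) vl))))"
      by (simp add: Bs_def sl_apply)
    also have "\<dots> = ind V U y + (k-1) * sum_list (map (\<lambda>f. f y) (map (\<lambda>v. ind {v} {}) vl))"
      by (simp only: sl_concat_rep)
    also have "sum_list (map (\<lambda>f. f y) (map (\<lambda>v. ind {v} {}) vl)) = (\<Sum>v\<in>V. ind {v} {} y)"
      using vl by (simp add: sum_list_distinct_conv_sum_set comp_def)
    finally show ?thesis .
  qed
  have eqAB: "sum_list As = sum_list Bs"
  proof
    fix y show "sum_list As y = sum_list Bs y"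
    proof (cases y)
      case (Inl x)
      have "(\<Sum>v\<in>V. ind {v} {} (Inl x)) = (\<Sum>v\<in>V. if x = v then 1 else 0)"
        by (intro sum.cong) (auto simp: ind_def)
      also have "\<dots> = (if x \<in> V then 1 else 0)" using finV by simp
      finally have h1: "(\<Sum>v\<in>V. ind {v} {} (Inl x)) = (if x \<in> V then 1 else 0)" .
      have h2: "(\<Sum>j<k. ind V (Ts j) (Inl x)) = k * (if x \<in> V then 1 else 0)"
        by (simp add: ind_def)
      have h3: "ind V U (Inl x) = (if x \<in> V then 1 else 0)" by (simp add: ind_def)
      have "sum_list As y = k * (if x \<in> V then 1 else 0)" by (simp only: Inl LA h2)
      moreover have "sum_list Bs y = (if x \<in> V then 1 else 0) + (k-1) * (if x \<in> V then 1 else 0)"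
        by (simp only: Inl LB h1 h3)
      moreover have "k * c = c + (k-1) * c" for c :: nat using k0 by (cases k) auto
      ultimately show ?thesis by simp
    next
      case (Inr e)
      have "(\<Sum>v\<in>V. ind {v} {} (Inr e)) = 0" by (simp add: ind_def)
      moreover have "(\<Sum>j<k. ind V (Ts j) (Inr e)) = (if e \<in> U then 1 else 0)"
        unfolding U_def using sum_indicator_disj[OF dis, of e] by (simp add: ind_def)
      moreover have "ind V U (Inr e) = (if e \<in> U then 1 else 0)" by (simp add: ind_def)
      ultimately show ?thesis using Inr LA LB by simp
    qed
  qed
  have lenA: "length As = k" by (simp add: As_def)
  have lenB: "length Bs = (k-1) * card V + 1"
    using vl by (simp add: Bs_def len_concat_rep distinct_card[symmetric])
  define a where "a = sum_list As"
  have "agglomeration V E r a" unfolding a_def using atA by (intro agg_sum_list) (auto intro: atom_agg)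
  moreover have "k \<in> agg_lengths V E r a"
    unfolding agg_lengths_def a_def mem_Collect_eq using lenA atA by (intro exI[of _ As]) simp
  moreover have "(k-1) * card V + 1 \<in> agg_lengths V E r a"
    unfolding agg_lengths_def a_def mem_Collect_eq using lenB atB eqAB by (intro exI[of _ Bs]) simp
  ultimately show ?thesis by blast
qed



theorem theorem4p15:
  fixes V :: "'v set" and E :: "'e set" and r :: "'e \<Rightarrow> 'v set" and k :: nat
  assumes "graph V E r" and "V \<noteq> {}" and "k \<ge> 2"
  shows "agg_rho V E r k \<le> enat ((k - 1) * card V + 1) \<and>
         (agg_rho V E r k = enat ((k - 1) * card V + 1) \<longleftrightarrow>
           has_k_edge_disjoint_spanning_trees V E r k) \<and>
         (agg_rho V E r k = enat ((k - 1) * card V + 1) \<longrightarrow> edge_connectivity_ge V E r k)"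
proof -
  note G = assms(1) and Vne = assms(2) and k = assms(3)
  define N where "N = (k - 1) * card V + 1"
  have finE: "finite E" using G by (simp add: graph_def)
  have bound: "m \<le> N" if ag: "agglomeration V E r a" and kL: "k \<in> agg_lengths V E r a"
    and mL: "m \<in> agg_lengths V E r a" for a m
  proof -
    obtain As where As: "length As = k" "\<forall>f\<in>set As. agg_atom V E r f" "sum_list As = a"
      using kL unfolding agg_lengths_def by blast
    obtain Bs where Bs: "length Bs = m" "\<forall>f\<in>set Bs. agg_atom V E r f" "sum_list Bs = a"
      using mL unfolding agg_lengths_def by blast
    have "sum_list As = sum_list Bs" using As(3) Bs(3) by simp
    then show ?thesis using core_lists[OF G k As(1,2) Bs(2)] Bs(1) by (simp add: N_def)
  qed
  have le: "agg_rho V E r k \<le> enat N"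
    unfolding agg_rho_def
  proof (rule Sup_least)
    fix x assume "x \<in> {Sup (enat ` agg_lengths V E r a) |a. agglomeration V E r a \<and> k \<in> agg_lengths V E r a}"
    then obtain a where a: "x = Sup (enat ` agg_lengths V E r a)" "agglomeration V E r a" "k \<in> agg_lengths V E r a"
      by blast
    show "x \<le> enat N" unfolding a(1)
      using bound[OF a(2) a(3)] by (auto intro!: Sup_least)
  qed
  have dir1: "has_k_edge_disjoint_spanning_trees V E r k" if eq: "agg_rho V E r k = enat N"
  proof -
    have "\<exists>a. agglomeration V E r a \<and> k \<in> agg_lengths V E r a \<and> N \<in> agg_lengths V E r a"
    proof (rule ccontr)
      assume no: "\<not> (\<exists>a. agglomeration V E r a \<and> k \<in> agg_lengths V E r a \<and> N \<in> agg_lengths V E r a)"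
      have "agg_rho V E r k \<le> enat (N - 1)"
        unfolding agg_rho_def
      proof (rule Sup_least)
        fix x assume "x \<in> {Sup (enat ` agg_lengths V E r a) |a. agglomeration V E r a \<and> k \<in> agg_lengths V E r a}"
        then obtain a where a: "x = Sup (enat ` agg_lengths V E r a)" "agglomeration V E r a" "k \<in> agg_lengths V E r a"
          by blast
        have "m \<le> N - 1" if "m \<in> agg_lengths V E r a" for m
          using bound[OF a(2) a(3) that] no a that by (cases "m = N") auto
        then show "x \<le> enat (N - 1)" unfolding a(1) by (auto intro!: Sup_least)
      qed
      then show False using eq by (simp add: N_def)
    qed
    then obtain a where a: "agglomeration V E r a" "k \<in> agg_lengths V E r a" "N \<in> agg_lengths V E r a"
      by blast
    obtain As where As: "length As = k" "\<forall>f\<in>set As. agg_atom V E r f" "sum_list As = a"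
      using a(2) unfolding agg_lengths_def by blast
    obtain Bs where Bs: "length Bs = N" "\<forall>f\<in>set Bs. agg_atom V E r f" "sum_list Bs = a"
      using a(3) unfolding agg_lengths_def by blast
    have "sum_list As = sum_list Bs" using As(3) Bs(3) by simp
    then have C: "(\<forall>j<k. vset V (As ! j) = V) \<and> (\<forall>e\<in>E. (\<Sum>j<k. (As ! j) (Inr e)) \<le> 1)"
      using core_lists[OF G k As(1,2) Bs(2)] Bs(1) by (simp add: N_def)
    define T where "T = (\<lambda>j. eset E (As ! j))"
    have atj: "agg_atom V E r (As ! j)" if "j < k" for j using As that by auto
    have connT: "connected_sub V r (T j)" if "j < k" for j
      unfolding connected_sub_def T_def
    proof (intro ballI)
      fix u w assume "u \<in> V" "w \<in> V"
      then show "(adj r (eset E (As ! j)))\<^sup>*\<^sup>* u w"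
        using atom_conn[OF G atj[OF that]] C that by simp
    qed
    have TE: "T j \<subseteq> E" for j by (auto simp: T_def eset_def)
    have disT: "T i \<inter> T j = {}" if "i < k" "j < k" "i \<noteq> j" for i j
    proof (rule ccontr)
      assume "T i \<inter> T j \<noteq> {}"
      then obtain e where e: "e \<in> E" "(As ! i) (Inr e) = 1" "(As ! j) (Inr e) = 1"
        by (auto simp: T_def eset_def)
      have "(\<Sum>l\<in>{i, j}. (As ! l) (Inr e)) \<le> (\<Sum>l<k. (As ! l) (Inr e))"
        using that by (intro sum_mono2) auto
      then have "2 \<le> (\<Sum>l<k. (As ! l) (Inr e))" using e that by simp
      then show False using C e(1) by fastforce
    qed
    define Ts where "Ts = (\<lambda>j. SOME S. S \<subseteq> T j \<and> spanning_tree V E r S)"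
    have Ts: "Ts j \<subseteq> T j \<and> spanning_tree V E r (Ts j)" if "j < k" for j
    proof -
      have "\<exists>S. S \<subseteq> T j \<and> spanning_tree V E r S"
        using tree_exists[OF finite_subset[OF TE finE] connT[OF that] TE] by blast
      then show ?thesis unfolding Ts_def by (rule someI_ex)
    qed
    show ?thesis unfolding has_k_edge_disjoint_spanning_trees_def
    proof (intro exI[of _ Ts] conjI allI impI)
      fix i assume "i < k" then show "spanning_tree V E r (Ts i)" using Ts by blast
    next
      fix i j assume "i < k" "j < k" "i \<noteq> j"
      then show "Ts i \<inter> Ts j = {}" using Ts[of i] Ts[of j] disT[of i j] by blast
    qed
  qed
  have dir2: "agg_rho V E r k = enat N" if hk: "has_k_edge_disjoint_spanning_trees V E r k"
  proof -
    obtain Ts where Ts: "\<forall>i<k. spanning_tree V E r (Ts i)" "\<forall>i<k. \<forall>j<k. i \<noteq> j \<longrightarrow> Ts i \<inter> Ts j = {}"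
      using hk unfolding has_k_edge_disjoint_spanning_trees_def by blast
    obtain a where a: "agglomeration V E r a" "k \<in> agg_lengths V E r a" "N \<in> agg_lengths V E r a"
      using construct[OF G Vne k Ts] unfolding N_def by blast
    have "enat N \<le> Sup (enat ` agg_lengths V E r a)" using a(3) by (auto intro: Sup_upper)
    also have "\<dots> \<le> agg_rho V E r k" unfolding agg_rho_def using a(1,2) by (auto intro!: Sup_upper)
    finally show ?thesis using le by simp
  qed
  have dir3: "edge_connectivity_ge V E r k" if eq: "agg_rho V E r k = enat N"
  proof -
    obtain Ts where Ts: "\<forall>i<k. spanning_tree V E r (Ts i)" "\<forall>i<k. \<forall>j<k. i \<noteq> j \<longrightarrow> Ts i \<inter> Ts j = {}"
      using dir1[OF eq] unfolding has_k_edge_disjoint_spanning_trees_def by blast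
    show ?thesis using trees_edge_conn[OF finE Ts] .
  qed
  show ?thesis using le dir1 dir2 dir3 unfolding N_def by blast
qed

end
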